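(* For all integers $m\ge1$, $r\ge0$ and $n\ge0$, $$\mathcal D_{m,r}(n,x)=\frac1{n+1}\sum_{k=0}^n\sum_{l=0}^{n-k}\sum_{s=0}^l\binom{n+1}{l+1}\binom{l+1}{s+1}W_{m,r}(n-l,k)\,m^{l-s}\,T^{[m]}_{s+1}(1)\,\mathcal B_{l-s}\,\mathcal B_k(x).$$
   Context: The Bernoulli polynomials are defined by $\sum_{n\ge0}\mathcal B_n(x)\frac{t^n}{n!}=\frac{te^{xt}}{e^t-1}$ and $\mathcal B_n:=\mathcal B_n(0)$. For integers $m\ge1$, $n,k,r\ge0$, $W_{m,r}(n,k)$ denotes the $r$-Whitney number of the second kind, defined by $\sum_{n\ge k}W_{m,r}(n,k)\frac{z^n}{n!}=\frac{e^{rz}}{k!}\left(\frac{e^{mz}-1}{m}\right)^k$; the $r$-Dowling polynomial is $\mathcal D_{m,r}(n,u):=\sum_{k=0}^nW_{m,r}(n,k)u^k$; and the $[m]$-Touchard polynomials are $T^{[m]}_n(x):=\sum_{k=0}^n W_{m,0}(n,k)x^k$. *)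

theory Defs
  imports "HOL-Analysis.Analysis" "HOL-Computational_Algebra.Formal_Power_Series"
begin

definition bernpoly :: "nat \<Rightarrow> real \<Rightarrow> real" where
  "bernpoly n x = fact n * fps_nth (fps_X * fps_exp x / (fps_exp 1 - 1)) n"

definition bernnum :: "nat \<Rightarrow> real" where
  "bernnum n = bernpoly n 0"

definition whitney2 :: "nat \<Rightarrow> nat \<Rightarrow> nat \<Rightarrow> nat \<Rightarrow> real" where
  "whitney2 m r n k = fact n * fps_nth
     (fps_exp (real r) * fps_const (1 / fact k) * ((fps_exp (real m) - 1) / fps_const (real m)) ^ k) n"

definition dowling :: "nat \<Rightarrow> nat \<Rightarrow> nat \<Rightarrow> real \<Rightarrow> real" where
  "dowling m r n u = (\<Sum>k=0..n. whitney2 m r n k * u ^ k)"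

definition touchard :: "nat \<Rightarrow> nat \<Rightarrow> real \<Rightarrow> real" where
  "touchard m n x = (\<Sum>k=0..n. whitney2 m 0 n k * x ^ k)"

end

theory Submission
  imports Defs
begin
unbundle no vec_syntax
unbundle fps_syntax

lemma pow_prefix: fixes u :: "real fps" assumes "u$0 = 0" "j < k" shows "(u^k)$j = 0"
  using startsby_zero_power_prefix[OF assms(1)] assms(2) by blast

lemma comp_coeff:
  fixes E c u :: "real fps" assumes u0: "u$0 = 0"
  shows "(E * (c oo u))$n = (\<Sum>k=0..n. c$k * (E * u^k)$n)"
proof -
  have "(E * (c oo u))$n = (\<Sum>i=0..n. E$i * (\<Sum>k=0..n-i. c$k * (u^k)$(n-i)))"
    by (simp add: fps_mult_nth fps_compose_nth)
  also have "\<dots> = (\<Sum>i=0..n. E$i * (\<Sum>k=0..n. c$k * (u^k)$(n-i)))"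
  proof (rule sum.cong[OF refl])
    fix i assume "i \<in> {0..n}"
    have "(\<Sum>k=0..n-i. c$k * (u^k)$(n-i)) = (\<Sum>k=0..n. c$k * (u^k)$(n-i))"
      by (rule sum.mono_neutral_left) (auto simp: pow_prefix[OF u0])
    then show "E$i * (\<Sum>k=0..n-i. c$k * (u^k)$(n-i)) = E$i * (\<Sum>k=0..n. c$k * (u^k)$(n-i))" by simp
  qed
  also have "\<dots> = (\<Sum>i=0..n. \<Sum>k=0..n. c$k * (E$i * (u^k)$(n-i)))"
    by (simp add: sum_distrib_left ac_simps)
  also have "\<dots> = (\<Sum>k=0..n. \<Sum>i=0..n. c$k * (E$i * (u^k)$(n-i)))"
    by (rule sum.swap)
  also have "\<dots> = (\<Sum>k=0..n. c$k * (E * u^k)$n)"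
    by (simp add: fps_mult_nth sum_distrib_left)
  finally show ?thesis .
qed

definition U :: "nat \<Rightarrow> real fps" where
  "U m = fps_const (inverse (real m)) * (fps_exp (real m) - 1)"

lemma U0[simp]: "U m $ 0 = 0" by (simp add: U_def)

lemma W_eq: "whitney2 m r n k = fact n / fact k * (fps_exp (real r) * U m ^ k)$n"
proof -
  have e: "fps_exp (real r) * fps_const (1 / fact k) * ((fps_exp (real m) - 1) / fps_const (real m)) ^ k
        = fps_const (1 / fact k) * (fps_exp (real r) * U m ^ k)"
    by (simp add: U_def ac_simps)
  show ?thesis unfolding whitney2_def e by simp
qed

lemma W_zero: assumes "n < k" shows "whitney2 m r n k = 0"
proof -
  have "(fps_exp (real r) * U m ^ k)$n = 0"
    unfolding fps_mult_nth using assms by (intro sum.neutral) (auto simp: pow_prefix)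
  then show ?thesis by (simp add: W_eq)
qed

lemma dowling_eq: "dowling m r n x = fact n * (fps_exp (real r) * (fps_exp x oo U m))$n"
  by (simp add: dowling_def comp_coeff W_eq sum_distrib_left ac_simps)

lemma touch_eq: "touchard m i 1 = fact i * (fps_exp 1 oo U m)$i"
  by (simp add: touchard_def fps_compose_nth W_eq sum_distrib_left)

definition Hb :: "real fps" where "Hb = fps_shift 1 (fps_exp 1 - 1)"

lemma Hb_X: "fps_X * Hb = fps_exp 1 - 1"
  by (rule fps_ext) (auto simp: Hb_def fps_X_mult_nth)

lemma Hb0[simp]: "Hb $ 0 = 1" by (simp add: Hb_def)

definition beta :: "real \<Rightarrow> real fps" where "beta x = fps_X * fps_exp x / (fps_exp 1 - 1)"

lemma bernpoly_eq: "bernpoly k x = fact k * beta x $ k"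
  by (simp add: bernpoly_def beta_def)

lemma bernnum_eq: "bernnum k = fact k * beta 0 $ k"
  by (simp add: bernnum_def bernpoly_eq)

lemma beta_mult: "beta x * (fps_exp 1 - 1) = fps_X * fps_exp x"
proof -
  have s1: "subdegree (fps_exp (1::real) - 1) = 1"
    by (rule subdegreeI) auto
  have s2: "subdegree (fps_X * fps_exp x) = 1"
    by (rule subdegreeI) auto
  have nz: "fps_exp (1::real) - 1 \<noteq> 0"
    using s1 by auto
  show ?thesis unfolding beta_def
    by (rule fps_times_divide_eq[OF nz]) (simp only: s1 s2 order_refl)
qed

lemma beta_Hb: "Hb * beta x = fps_exp x"
proof -
  have "fps_X * (Hb * beta x) = fps_X * fps_exp x"
    using beta_mult[of x] by (simp add: Hb_X[symmetric] ac_simps)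
  then show ?thesis by simp
qed

definition sc :: "real \<Rightarrow> real fps \<Rightarrow> real fps" where "sc c f = Abs_fps (\<lambda>j. c^j * f$j)"

lemma sc_nth[simp]: "sc c f $ j = c^j * f$j" by (simp add: sc_def)

lemma sc_mult: "sc c (f*g) = sc c f * sc c g"
proof (rule fps_ext)
  fix n
  have "sc c (f*g) $ n = (\<Sum>i=0..n. c^i * f$i * (c^(n-i) * g$(n-i)))"
    by (auto simp: fps_mult_nth sum_distrib_left intro!: sum.cong simp flip: power_add)
  then show "sc c (f*g) $ n = (sc c f * sc c g) $ n" by (simp add: fps_mult_nth)
qed

definition Bm :: "nat \<Rightarrow> real fps" where "Bm m = sc (real m) (beta 0)"

lemma U_sc: "U m = fps_const (inverse (real m)) * sc (real m) (fps_exp 1 - 1)"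
  unfolding U_def by (rule arg_cong[where f="(*) _"], rule fps_ext) (auto simp: power_divide)

lemma Bm_U: assumes "m \<ge> 1" shows "Bm m * U m = fps_X"
proof -
  have "Bm m * U m = fps_const (inverse (real m)) * sc (real m) (beta 0 * (fps_exp 1 - 1))"
    by (simp add: Bm_def U_sc sc_mult ac_simps)
  also have "\<dots> = fps_const (inverse (real m)) * sc (real m) fps_X"
    by (simp add: beta_mult)
  also have "\<dots> = fps_X"
    using assms by (intro fps_ext) (auto simp: fps_X_def)
  finally show ?thesis .
qed

definition A :: "nat \<Rightarrow> real fps" where "A m = ((fps_exp 1 - 1) oo U m) * Bm m"

lemma A_eq: assumes "m \<ge> 1" shows "A m = (Hb oo U m) * fps_X"
proof -
  have "(fps_exp 1 - 1) oo U m = U m * (Hb oo U m)"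
    by (simp add: Hb_X[symmetric] fps_compose_mult_distrib)
  then show ?thesis using Bm_U[OF assms] by (simp add: A_def ac_simps)
qed

lemma Tser_nth: "((fps_exp 1 - 1) oo U m) $ Suc s = touchard m (Suc s) 1 / fact (Suc s)"
  by (simp add: fps_compose_sub_distrib touch_eq)

lemma Tser_0: "((fps_exp 1 - 1) oo U m) $ 0 = 0"
  by simp

lemma a1: "(\<Sum>s=0..l. real ((l+1) choose (s+1)) * real m ^ (l-s) * touchard m (s+1) 1 * bernnum (l-s))
    = fact (l+1) * A m $ (l+1)"
proof -
  have "A m $ (l+1) = (\<Sum>i=0..Suc l. ((fps_exp 1 - 1) oo U m) $ i * Bm m $ (Suc l - i))"
    by (simp add: A_def fps_mult_nth)
  also have "\<dots> = (\<Sum>s=0..l. ((fps_exp 1 - 1) oo U m) $ Suc s * Bm m $ (l - s))"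
    by (subst sum.atLeast0_atMost_Suc_shift) (simp only: Tser_0, simp)
  also have "\<dots> = (\<Sum>s=0..l. touchard m (Suc s) 1 / fact (Suc s) * (real m ^ (l-s) * bernnum (l-s) / fact (l-s)))"
    by (simp add: Tser_nth Bm_def bernnum_eq)
  finally have "fact (l+1) * A m $ (l+1) = (\<Sum>s=0..l. fact (l+1) * (touchard m (Suc s) 1 / fact (Suc s) * (real m ^ (l-s) * bernnum (l-s) / fact (l-s))))"
    by (simp add: sum_distrib_left)
  also have "\<dots> = (\<Sum>s=0..l. real ((l+1) choose (s+1)) * real m ^ (l-s) * touchard m (s+1) 1 * bernnum (l-s))"
  proof (rule sum.cong[OF refl])
    fix s assume "s \<in> {0..l}"
    then have "s + 1 \<le> l + 1" by simp
    from binomial_fact[OF this] have "real ((l+1) choose (s+1)) = fact (l+1) / (fact (s+1) * fact (l - s))"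
      by simp
    then show "fact (l+1) * (touchard m (Suc s) 1 / fact (Suc s) * (real m ^ (l-s) * bernnum (l-s) / fact (l-s)))
       = real ((l+1) choose (s+1)) * real m ^ (l-s) * touchard m (s+1) 1 * bernnum (l-s)"
      by simp
  qed
  finally show ?thesis by simp
qed

lemma A0: "A m $ 0 = 0" by (simp add: A_def)

lemma a2: assumes "k \<le> n"
  shows "(\<Sum>l=0..n-k. real ((n+1) choose (l+1)) * whitney2 m r (n-l) k * (fact (l+1) * A m $ (l+1)))
    = fact (n+1) / fact k * (A m * (fps_exp (real r) * U m ^ k)) $ (n+1)"
proof -
  let ?G = "fps_exp (real r) * U m ^ k"
  have "(\<Sum>l=0..n-k. real ((n+1) choose (l+1)) * whitney2 m r (n-l) k * (fact (l+1) * A m $ (l+1)))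
      = (\<Sum>l=0..n. real ((n+1) choose (l+1)) * whitney2 m r (n-l) k * (fact (l+1) * A m $ (l+1)))"
    by (rule sum.mono_neutral_left) (auto simp: W_zero)
  also have "\<dots> = (\<Sum>l=0..n. fact (n+1) / fact k * (A m $ Suc l * ?G $ (n - l)))"
  proof (rule sum.cong[OF refl])
    fix l assume "l \<in> {0..n}"
    then have "l + 1 \<le> n + 1" by simp
    from binomial_fact[OF this] have "real ((n+1) choose (l+1)) = fact (n+1) / (fact (l+1) * fact (n - l))"
      by simp
    then show "real ((n+1) choose (l+1)) * whitney2 m r (n-l) k * (fact (l+1) * A m $ (l+1))
        = fact (n+1) / fact k * (A m $ Suc l * ?G $ (n - l))"
      by (simp add: W_eq)
  qed
  also have "\<dots> = fact (n+1) / fact k * (\<Sum>l=0..n. A m $ Suc l * ?G $ (n - l))"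
    by (simp add: sum_distrib_left)
  also have "(\<Sum>l=0..n. A m $ Suc l * ?G $ (n - l)) = (A m * ?G) $ (n+1)"
    unfolding fps_mult_nth by (subst (2) Suc_eq_plus1[symmetric], subst sum.atLeast0_atMost_Suc_shift) (simp add: A0)
  finally show ?thesis .
qed

theorem mainTheorem16:
  fixes m r n :: nat and x :: real
  assumes "m \<ge> 1"
  shows "dowling m r n x =
    1 / (real n + 1) *
    (\<Sum>k=0..n. \<Sum>l=0..n-k. \<Sum>s=0..l.
        real ((n+1) choose (l+1)) * real ((l+1) choose (s+1)) * whitney2 m r (n-l) k
        * real m ^ (l-s) * touchard m (s+1) 1 * bernnum (l-s) * bernpoly k x)"
proof -
  let ?E = "fps_exp (real r)"
  let ?H = "Hb oo U m"
  have step: "(\<Sum>l=0..n-k. \<Sum>s=0..l.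
        real ((n+1) choose (l+1)) * real ((l+1) choose (s+1)) * whitney2 m r (n-l) k
        * real m ^ (l-s) * touchard m (s+1) 1 * bernnum (l-s) * bernpoly k x)
      = (real n + 1) * fact n * (beta x $ k * ((?H * ?E) * U m ^ k) $ n)" if k: "k \<le> n" for k
  proof -
    have "(\<Sum>l=0..n-k. \<Sum>s=0..l.
        real ((n+1) choose (l+1)) * real ((l+1) choose (s+1)) * whitney2 m r (n-l) k
        * real m ^ (l-s) * touchard m (s+1) 1 * bernnum (l-s) * bernpoly k x)
      = bernpoly k x * (\<Sum>l=0..n-k. real ((n+1) choose (l+1)) * whitney2 m r (n-l) k *
          (\<Sum>s=0..l. real ((l+1) choose (s+1)) * real m ^ (l-s) * touchard m (s+1) 1 * bernnum (l-s)))"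
      by (simp add: sum_distrib_left ac_simps)
    also have "\<dots> = bernpoly k x * (fact (n+1) / fact k * (A m * (?E * U m ^ k)) $ (n+1))"
      by (simp only: a1 a2[OF k])
    also have "(A m * (?E * U m ^ k)) $ (n+1) = ((?H * ?E) * U m ^ k) $ n"
      by (simp add: A_eq[OF assms] ac_simps)
    finally show ?thesis by (simp add: bernpoly_eq)
  qed
  have "1 / (real n + 1) *
    (\<Sum>k=0..n. \<Sum>l=0..n-k. \<Sum>s=0..l.
        real ((n+1) choose (l+1)) * real ((l+1) choose (s+1)) * whitney2 m r (n-l) k
        * real m ^ (l-s) * touchard m (s+1) 1 * bernnum (l-s) * bernpoly k x)
      = 1 / (real n + 1) * (\<Sum>k=0..n. (real n + 1) * fact n * (beta x $ k * ((?H * ?E) * U m ^ k) $ n))"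
    by (rule arg_cong[where f="(*) _"], rule sum.cong[OF refl], rule step) simp
  also have "\<dots> = fact n * (\<Sum>k=0..n. beta x $ k * ((?H * ?E) * U m ^ k) $ n)"
    by (simp add: sum_distrib_left[symmetric])
  also have "(\<Sum>k=0..n. beta x $ k * ((?H * ?E) * U m ^ k) $ n) = ((?H * ?E) * (beta x oo U m)) $ n"
    by (simp add: comp_coeff)
  also have "(?H * ?E) * (beta x oo U m) = ?E * ((Hb * beta x) oo U m)"
    by (simp add: fps_compose_mult_distrib ac_simps)
  also have "\<dots> = ?E * (fps_exp x oo U m)" by (simp add: beta_Hb)
  finally show ?thesis by (simp add: dowling_eq)
qed

end
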